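(* Let $W=\mathfrak{S}_n$, $1\le c\le n-2$, and let $w_2\in\mathfrak{S}_n$ with $w_2^2=1$. Suppose $\ell(s_{c+1}s_cw_2s_c)=\ell(w_2)+3$, $s_cw_2\neq w_2s_c$, $s_{c+1}s_cw_2s_c=s_cw_2s_cs_{c+1}$ and $s_{c+1}w_2s_c<w_2s_c$. Then $s_{c+1}w_2<w_2$.
   Context: $s_j=(j,j+1)$; $\ell$ is the Coxeter length of $\mathfrak{S}_n$ and $<$ is the Bruhat order. *)

theory Defs
  imports "HOL-Combinatorics.Combinatorics"
begin

text \<open>Elements of the symmetric group S_n are permutations of {1..n};
  the group product u w is function composition u \<circ> w.\<close>

abbreviation sym_grp :: "nat \<Rightarrow> (nat \<Rightarrow> nat) set" where
  "sym_grp n \<equiv> {p. p permutes {1..n}}"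

definition s :: "nat \<Rightarrow> nat \<Rightarrow> nat" where
  "s j = Transposition.transpose j (j + 1)"

definition len :: "nat \<Rightarrow> (nat \<Rightarrow> nat) \<Rightarrow> nat" where
  "len n w = card {(i, j). i \<in> {1..n} \<and> j \<in> {1..n} \<and> i < j \<and> w j < w i}"

definition reflections :: "nat \<Rightarrow> (nat \<Rightarrow> nat) set" where
  "reflections n = {Transposition.transpose a b | a b. a \<in> {1..n} \<and> b \<in> {1..n} \<and> a \<noteq> b}"

definition bruhat_lt :: "nat \<Rightarrow> (nat \<Rightarrow> nat) \<Rightarrow> (nat \<Rightarrow> nat) \<Rightarrow> bool" where
  "bruhat_lt n u v \<longleftrightarrow>
     (u, v) \<in> {(w, w \<circ> t) | w t. w \<in> sym_grp n \<and> t \<in> reflections n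
                                   \<and> len n w < len n (w \<circ> t)}\<^sup>+"

end

theory Submission
  imports Defs
begin

lemma s_app: "s k x = (if x = k then Suc k else if x = Suc k then k else x)"
  by (simp add: s_def Transposition.transpose_def)

lemma s_mono: "a < b \<Longrightarrow> \<not>(a = c \<and> b = Suc c) \<Longrightarrow> s c a < s c b"
  by (auto simp: s_app)

lemma len_step:
  assumes "i < j" "i \<in> {1..n}" "j \<in> {1..n}" "p i = k" "p j = Suc k" "inj p"
  shows "len n p < len n (s k \<circ> p)"
proof -
  let ?A = "{(i, j). i \<in> {1..n} \<and> j \<in> {1..n} \<and> i < j \<and> p j < p i}"
  let ?B = "{(i, j). i \<in> {1..n} \<and> j \<in> {1..n} \<and> i < j \<and> (s k \<circ> p) j < (s k \<circ> p) i}"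
  have sub: "?A \<subseteq> ?B"
  proof
    fix x assume "x \<in> ?A"
    then obtain a b where x: "x = (a,b)" "a \<in> {1..n}" "b \<in> {1..n}" "a < b" "p b < p a" by auto
    have "\<not> (p b = k \<and> p a = Suc k)"
    proof
      assume "p b = k \<and> p a = Suc k"
      then have "p b = p i" "p a = p j" using assms(4,5) by simp_all
      then have "b = i" "a = j" by (simp_all add: injD[OF assms(6)])
      then show False using x assms(1) by simp
    qed
    then have "s k (p b) < s k (p a)" using x(5) by (auto simp: s_app)
    then show "x \<in> ?B" using x by auto
  qed
  have "(i,j) \<in> ?B" "(i,j) \<notin> ?A" using assms by (auto simp: s_app)
  then have "?A \<subset> ?B" using sub by blast
  moreover have "finite ?B"
    by (rule finite_subset[of _ "{1..n} \<times> {1..n}"]) auto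
  ultimately show ?thesis unfolding len_def by (rule psubset_card_mono[rotated])
qed

lemma bruhat_len:
  assumes "bruhat_lt n u v" shows "len n u < len n v"
  using assms unfolding bruhat_lt_def
proof (induction rule: trancl_induct)
  case (base y) then show ?case by auto
next
  case (step y z)
  from step.hyps(2) obtain t where "z = y \<circ> t" "len n y < len n (y \<circ> t)" by blast
  then have "len n y < len n z" by (simp only:)
  then show ?case using step.IH by linarith
qed

theorem lemma2p18:
  fixes n c :: nat and w2 :: "nat \<Rightarrow> nat"
  assumes "w2 \<in> sym_grp n"
    and "1 \<le> c" and "c \<le> n - 2"
    and "w2 \<circ> w2 = id"
    and "len n (s (c+1) \<circ> s c \<circ> w2 \<circ> s c) = len n w2 + 3"
    and "s c \<circ> w2 \<noteq> w2 \<circ> s c"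
    and "s (c+1) \<circ> s c \<circ> w2 \<circ> s c = s c \<circ> w2 \<circ> s c \<circ> s (c+1)"
    and "bruhat_lt n (s (c+1) \<circ> w2 \<circ> s c) (w2 \<circ> s c)"
  shows "bruhat_lt n (s (c+1) \<circ> w2) w2"
proof -
  have perm: "w2 permutes {1..n}" using assms(1) by simp
  have inv: "\<And>x. w2 (w2 x) = x" using assms(4) by (simp add: fun_eq_iff)
  have injw: "inj w2" by (rule injI) (metis inv)
  have sc: "\<And>x. s c (s c x) = x" by (simp add: s_app)
  have injs: "inj (s c)" by (metis sc injI)
  have cn: "c + 2 \<le> n" using assms(2,3) by linarith
  have in1: "c+1 \<in> {1..n}" "c+2 \<in> {1..n}" using cn by auto
  have w1: "w2 (c+1) \<in> {1..n}" "w2 (c+2) \<in> {1..n}"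
    using permutes_in_image[OF perm, of "c+1"] permutes_in_image[OF perm, of "c+2"] in1 by simp_all
  have sin: "\<And>x. x \<in> {1..n} \<Longrightarrow> s c x \<in> {1..n}" using cn assms(2) by (auto simp: s_app)
  define i where "i = s c (w2 (c+1))"
  define j where "j = s c (w2 (c+2))"
  have qi: "(w2 \<circ> s c) i = c+1" "(w2 \<circ> s c) j = Suc (c+1)"
    by (simp_all add: i_def j_def sc inv)
  have ij: "i \<in> {1..n}" "j \<in> {1..n}" using sin w1 by (auto simp: i_def j_def)
  have "len n (s (c+1) \<circ> (w2 \<circ> s c)) < len n (w2 \<circ> s c)"
    using bruhat_len[OF assms(8)] by (simp add: comp_assoc)
  moreover have "inj (w2 \<circ> s c)" using injw injs by (simp add: inj_compose)
  ultimately have "\<not> i < j" using len_step[OF _ ij qi] by fastforce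
  moreover have "i \<noteq> j" using qi by auto
  ultimately have ji: "j < i" by simp
  have lt: "w2 (c+2) < w2 (c+1)"
  proof (rule ccontr)
    assume "\<not> ?thesis"
    moreover have "w2 (c+1) \<noteq> w2 (c+2)"
    proof
      assume "w2 (c+1) = w2 (c+2)"
      then have "c+1 = c+2" by (rule injD[OF injw])
      then show False by simp
    qed
    ultimately have le: "w2 (c+1) < w2 (c+2)" by linarith
    show False
    proof (cases "w2 (c+1) = c \<and> w2 (c+2) = c+1")
      case True
      then have "w2 (w2 (c+1)) = w2 c" by simp
      then have "w2 c = c+1" using inv[of "c+1"] by simp
      then have "w2 c = w2 (c+2)" using True by simp
      then have "c = c+2" by (rule injD[OF injw])
      then show False by simp
    next
      case False
      then have "i < j" using s_mono[OF le, of c] unfolding i_def j_def by simp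
      then show False using ji by simp
    qed
  qed
  define u where "u = s (c+1) \<circ> w2"
  define t where "t = Transposition.transpose (w2 (c+2)) (w2 (c+1))"
  have ut: "u \<circ> t = w2"
  proof
    fix x show "(u \<circ> t) x = w2 x"
    proof -
      have a: "x = w2 (c+2) \<longleftrightarrow> w2 x = c+2" using inv by metis
      have b: "x = w2 (c+1) \<longleftrightarrow> w2 x = c+1" using inv by metis
      show ?thesis unfolding u_def t_def Transposition.transpose_def
        using a b by (simp add: s_app inv)
    qed
  qed
  have lu: "len n u < len n (s (c+1) \<circ> u)"
  proof (rule len_step[OF lt w1(2) w1(1)])
    show "u (w2 (c+2)) = c+1" by (simp add: u_def inv s_app)
    show "u (w2 (c+1)) = Suc (c+1)" by (simp add: u_def inv s_app)
    show "inj u" unfolding u_def using injw by (simp add: inj_compose s_def)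
  qed
  have "s (c+1) \<circ> u = w2" by (auto simp: u_def fun_eq_iff s_app)
  with lu have lu': "len n u < len n (u \<circ> t)" using ut by (simp only:)
  have sp: "s (c+1) permutes {1..n}" unfolding s_def
    by (rule permutes_swap_id) (use in1 in auto)
  have "u \<in> sym_grp n" unfolding u_def using permutes_compose[OF perm sp] by simp
  moreover have "t \<in> reflections n" unfolding reflections_def t_def
  proof (intro CollectI exI conjI)
    show "w2 (c+2) \<noteq> w2 (c+1)" using lt by simp
  qed (use w1 in auto)
  ultimately have "(u, u \<circ> t) \<in> {(w, w \<circ> t) | w t. w \<in> sym_grp n \<and> t \<in> reflections n
                                   \<and> len n w < len n (w \<circ> t)}" using lu' by blast
  then have "bruhat_lt n u (u \<circ> t)" unfolding bruhat_lt_def by (rule r_into_trancl)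
  then show ?thesis unfolding ut by (simp only: u_def)
qed

end
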